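(* Let $\alpha,\beta\ge1$. (i) For every $2\times2$ matrix $A$ with strictly positive entries and $R(A)=\alpha$, there exists a $2\times 2$ matrix $B$ with strictly positive entries and $R(B)=\beta$ such that $R(AB)=\Phi(\alpha,\beta)$. (ii) For every $2\times2$ matrix $B$ with strictly positive entries and $R(B)=\beta$, there exists a $2\times2$ matrix $A$ with strictly positive entries and $R(A)=\alpha$ such that $R(AB)=\Phi(\alpha,\beta)$.
   Context: For a $2\times2$ matrix $A=(a_{ij})$ with strictly positive entries, $F(A)=\frac{a_{11}a_{22}}{a_{12}a_{21}}$ and the distortion is $R(A)=\max\{F(A),1/F(A)\}$. The envelope function is $\Phi(\alpha,\beta)=\left(\frac{1+\sqrt{\alpha\beta}}{\sqrt{\alpha}+\sqrt{\beta}}\right)^2$. *)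

theory Defs
  imports "HOL-Analysis.Analysis"
begin

text \<open>2x2 real matrices are represented as real^2^2; entry a_ij is A $ i $ j with i,j in {1,2}.\<close>

definition pos_matrix :: "real^2^2 \<Rightarrow> bool" where
  "pos_matrix A \<longleftrightarrow> (\<forall>i j. A $ i $ j > 0)"

definition cross_ratio_F :: "real^2^2 \<Rightarrow> real" where
  "cross_ratio_F A = (A $ 1 $ 1 * A $ 2 $ 2) / (A $ 1 $ 2 * A $ 2 $ 1)"

definition distortion :: "real^2^2 \<Rightarrow> real" where
  "distortion A = max (cross_ratio_F A) (1 / cross_ratio_F A)"

definition Phi :: "real \<Rightarrow> real \<Rightarrow> real" where
  "Phi \<alpha> \<beta> = ((1 + sqrt (\<alpha> * \<beta>)) / (sqrt \<alpha> + sqrt \<beta>))^2"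

end

theory Submission
  imports Defs
begin

definition mk2 :: "real \<Rightarrow> real \<Rightarrow> real \<Rightarrow> real \<Rightarrow> real^2^2" where
  "mk2 a b c d = vector [vector [a,b], vector [c,d]]"

lemma mk2_simps[simp]: "mk2 a b c d $ 1 $ 1 = a" "mk2 a b c d $ 1 $ 2 = b"
  "mk2 a b c d $ 2 $ 1 = c" "mk2 a b c d $ 2 $ 2 = d"
  by (simp_all add: mk2_def)

lemma mult_entries:
  fixes A B :: "real^2^2"
  shows "(A ** B) $ 1 $ 1 = A$1$1 * B$1$1 + A$1$2 * B$2$1"
    "(A ** B) $ 1 $ 2 = A$1$1 * B$1$2 + A$1$2 * B$2$2"
    "(A ** B) $ 2 $ 1 = A$2$1 * B$1$1 + A$2$2 * B$2$1"
    "(A ** B) $ 2 $ 2 = A$2$1 * B$1$2 + A$2$2 * B$2$2"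
  by (simp_all add: matrix_matrix_mult_def sum_2)

lemma pos_mk2: "a>0 \<Longrightarrow> b>0 \<Longrightarrow> c>0 \<Longrightarrow> d>0 \<Longrightarrow> pos_matrix (mk2 a b c d)"
  unfolding pos_matrix_def
proof (intro allI)
  fix i j :: 2
  assume h: "a>0" "b>0" "c>0" "d>0"
  show "0 < mk2 a b c d $ i $ j"
    using exhaust_2[of i] exhaust_2[of j] h by auto
qed

lemma pos_entries: "pos_matrix A \<Longrightarrow> A$1$1 > 0 \<and> A$1$2 > 0 \<and> A$2$1 > 0 \<and> A$2$2 > 0"
  unfolding pos_matrix_def by auto

lemma Phi_ge1: "\<alpha> \<ge> 1 \<Longrightarrow> \<beta> \<ge> 1 \<Longrightarrow> Phi \<alpha> \<beta> \<ge> 1"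
proof -
  assume h: "\<alpha> \<ge> 1" "\<beta> \<ge> 1"
  define u where "u = sqrt \<alpha>"
  define v where "v = sqrt \<beta>"
  have u: "u \<ge> 1" and v: "v \<ge> 1" using h by (auto simp: u_def v_def)
  have e: "sqrt (\<alpha>*\<beta>) = u * v" by (simp add: u_def v_def real_sqrt_mult)
  have "(u-1)*(v-1) \<ge> 0" using u v by simp
  hence "1 + u * v \<ge> u + v" by (simp add: algebra_simps)
  hence "(1+u * v)/(u+v) \<ge> 1" using u v by simp
  hence "((1+u * v)/(u+v))^2 \<ge> 1" by (simp add: one_le_power)
  thus ?thesis by (simp add: Phi_def e u_def v_def)
qed

lemma Phi_inv: "\<alpha> > 0 \<Longrightarrow> \<beta> > 0 \<Longrightarrow> Phi (1/\<alpha>) (1/\<beta>) = Phi \<alpha> \<beta>"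
proof -
  assume h: "\<alpha> > 0" "\<beta> > 0"
  define u where "u = sqrt \<alpha>"
  define v where "v = sqrt \<beta>"
  have u: "u > 0" and v: "v > 0" using h by (auto simp: u_def v_def)
  have "(1 + sqrt (1/\<alpha> * (1/\<beta>))) / (sqrt (1/\<alpha>) + sqrt (1/\<beta>)) = (1 + 1/(u * v))/(1/u+1/v)"
    by (simp add: u_def v_def real_sqrt_mult real_sqrt_divide)
  also have "\<dots> = ((1+u * v)/(u * v))/((u+v)/(u * v))" using u v by (simp add: field_simps)
  also have "\<dots> = (1+u * v)/(u+v)" using u v by simp
  finally show ?thesis by (simp add: Phi_def u_def v_def real_sqrt_mult)
qed

lemma key:
  assumes x: "x > 0" and y: "y > 0" and m: "m = 1 / sqrt (x * y)"
  shows "(1+m) * (1+x * m * y)/((1+m * y) * (1+x * m)) = Phi x y"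
proof -
  define u where "u = sqrt x"
  define v where "v = sqrt y"
  have u: "u > 0" and v: "v > 0" using x y by (auto simp: u_def v_def)
  have xu: "x = u * u" and yv: "y = v * v" using x y by (auto simp: u_def v_def)
  have mm: "m = 1/(u * v)" by (simp add: m u_def v_def real_sqrt_mult)
  have e1: "1+x * m * y = 1 + u * v" unfolding mm xu yv using u v by simp
  have e2: "1 + m * y = (u+v)/u" unfolding mm yv using u v by (simp add: field_simps)
  have e3: "1 + x * m = (u+v)/v" unfolding mm xu using u v by (simp add: field_simps)
  have e4: "1 + m = (1 + u * v)/(u * v)" unfolding mm using u v by (simp add: field_simps)
  have "(1+m) * (1+x * m * y)/((1+m * y) * (1+x * m)) = ((1 + u * v)/(u * v) * (1+u * v)) / ((u+v)/u * ((u+v)/v))"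
    by (simp only: e1 e2 e3 e4)
  also have "\<dots> = ((1+u * v)/(u+v))^2" using u v by (simp add: power2_eq_square)
  finally show ?thesis by (simp add: Phi_def u_def v_def real_sqrt_mult)
qed

lemma algA:
  fixes a b c d m y :: real
  assumes "a>0" "b>0" "c>0" "d>0" "m>0" "y>0"
  shows "((a * b+b * (a * m)) * (c * b+d * (a * m * y)))/((a * b+b * (a * m * y)) * (c * b+d * (a * m)))
     = (1+m) * (1+(a * d/(b * c)) * m * y)/((1+m * y) * (1+(a * d/(b * c)) * m))"
proof -
  have n1: "a * b+b * (a * m) = (a*b) * (1+m)" by (simp add: algebra_simps)
  have n2: "c * b+d * (a * m * y) = (c*b) * (1+(a * d/(b * c)) * m * y)" using assms by (simp add: field_simps)
  have n3: "a * b+b * (a * m * y) = (a*b) * (1+m*y)" by (simp add: algebra_simps)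
  have n4: "c * b+d * (a * m) = (c*b) * (1+(a * d/(b * c)) * m)" using assms by (simp add: field_simps)
  have p: "a*b*(c*b) \<noteq> 0" using assms by auto
  show ?thesis unfolding n1 n2 n3 n4
    using mult_divide_mult_cancel_left[OF p, of "(1+m) * (1+(a * d/(b * c)) * m * y)" "(1+m * y) * (1+(a * d/(b * c)) * m)"]
    by (simp only: ac_simps)
qed

lemma algB:
  fixes p q r s m x :: real
  assumes "p>0" "q>0" "r>0" "s>0" "m>0" "x>0"
  shows "((r * p+m * p * r) * (r * q+x * m * p * s))/((r * q+m * p * s) * (r * p+x * m * p * r))
     = (1+m) * (1+x * m * (p * s/(q * r)))/((1+m * (p * s/(q * r))) * (1+x * m))"
proof -
  have n1: "r * p+m * p * r = (r*p) * (1+m)" by (simp add: algebra_simps)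
  have n2: "r * q+x * m * p * s = (r*q) * (1+x * m * (p * s/(q * r)))" using assms by (simp add: field_simps)
  have n3: "r * q+m * p * s = (r*q) * (1+m * (p * s/(q * r)))" using assms by (simp add: field_simps)
  have n4: "r * p+x * m * p * r = (r*p) * (1+x * m)" by (simp add: algebra_simps)
  have p: "r*p*(r*q) \<noteq> 0" using assms by auto
  show ?thesis unfolding n1 n2 n3 n4
    using mult_divide_mult_cancel_left[OF p, of "(1+m) * (1+x * m * (p * s/(q * r)))" "(1+m * (p * s/(q * r))) * (1+x * m)"]
    by (simp only: ac_simps)
qed


lemma max_cases: "(z::real) > 0 \<Longrightarrow> max z (1/z) = g \<Longrightarrow> z = g \<or> z = 1/g"
  by (cases "z \<le> 1/z") (auto simp: max_def)

lemma max_ge1: "(g::real) \<ge> 1 \<Longrightarrow> max g (1/g) = g"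
proof -
  assume "g \<ge> 1" hence "1/g \<le> 1" by simp
  with \<open>g \<ge> 1\<close> have "1/g \<le> g" by linarith
  thus ?thesis by (simp add: max_absorb1)
qed

lemma max_inv: "(g::real) \<ge> 1 \<Longrightarrow> max (1/g) (1/(1/g)) = g"
  using max_ge1[of g] by (simp add: max.commute)

theorem mainTheorem3:
  fixes \<alpha> \<beta> :: real
  assumes "\<alpha> \<ge> 1" and "\<beta> \<ge> 1"
  shows "(\<forall>A. pos_matrix A \<and> distortion A = \<alpha> \<longrightarrow>
            (\<exists>B. pos_matrix B \<and> distortion B = \<beta> \<and> distortion (A ** B) = Phi \<alpha> \<beta>))
       \<and> (\<forall>B. pos_matrix B \<and> distortion B = \<beta> \<longrightarrow>
            (\<exists>A. pos_matrix A \<and> distortion A = \<alpha> \<and> distortion (A ** B) = Phi \<alpha> \<beta>))"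
proof (intro conjI allI impI)
  have ab: "\<alpha> > 0" "\<beta> > 0" using assms by auto
  have P1: "Phi \<alpha> \<beta> \<ge> 1" using Phi_ge1 assms by blast
  fix A assume hA: "pos_matrix A \<and> distortion A = \<alpha>"
  define a where "a = A$1$1"
  define b where "b = A$1$2"
  define c where "c = A$2$1"
  define d where "d = A$2$2"
  have pos: "a>0" "b>0" "c>0" "d>0" using pos_entries[of A] hA by (auto simp: a_def b_def c_def d_def)
  define x where "x = a * d / (b * c)"
  have x0: "x > 0" using pos by (simp add: x_def)
  have xc: "x = \<alpha> \<or> x = 1/\<alpha>" using max_cases[OF x0] hA
    by (simp add: distortion_def cross_ratio_F_def x_def a_def b_def c_def d_def)
  define y where "y = (if x = \<alpha> then \<beta> else 1/\<beta>)"
  have y0: "y > 0" using ab by (simp add: y_def)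
  define m where "m = 1 / sqrt (x * y)"
  have m0: "m > 0" using x0 y0 by (simp add: m_def)
  define B where "B = mk2 b b (a * m) (a * m * y)"
  have pB: "pos_matrix B" unfolding B_def using pos m0 y0 by (intro pos_mk2) auto
  have FB: "cross_ratio_F B = y" unfolding B_def cross_ratio_F_def using pos m0 by simp
  have dB: "distortion B = \<beta>" unfolding distortion_def FB y_def
    using max_ge1[OF assms(2)] max_inv[OF assms(2)] by auto
  have PhiE: "Phi x y = Phi \<alpha> \<beta>" using xc Phi_inv[OF ab] by (auto simp: y_def)
  have "cross_ratio_F (A ** B) = ((a * b+b * (a * m)) * (c * b+d * (a * m * y)))/((a * b+b * (a * m * y)) * (c * b+d * (a * m)))"
    unfolding cross_ratio_F_def mult_entries B_def by (simp add: a_def b_def c_def d_def)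
  also have "\<dots> = Phi x y" unfolding algA[OF pos m0 y0] x_def[symmetric]
    using key[OF x0 y0 m_def] .
  finally have "cross_ratio_F (A ** B) = Phi \<alpha> \<beta>" using PhiE by simp
  hence "distortion (A ** B) = Phi \<alpha> \<beta>" unfolding distortion_def using max_ge1[OF P1] by simp
  thus "\<exists>B. pos_matrix B \<and> distortion B = \<beta> \<and> distortion (A ** B) = Phi \<alpha> \<beta>"
    using pB dB by blast
next
  have ab: "\<alpha> > 0" "\<beta> > 0" using assms by auto
  have P1: "Phi \<alpha> \<beta> \<ge> 1" using Phi_ge1 assms by blast
  fix B assume hB: "pos_matrix B \<and> distortion B = \<beta>"
  define p where "p = B$1$1"
  define q where "q = B$1$2"
  define r where "r = B$2$1"
  define s where "s = B$2$2"
  have pos: "p>0" "q>0" "r>0" "s>0" using pos_entries[of B] hB by (auto simp: p_def q_def r_def s_def)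
  define y where "y = p * s / (q * r)"
  have y0: "y > 0" using pos by (simp add: y_def)
  have yc: "y = \<beta> \<or> y = 1/\<beta>" using max_cases[OF y0] hB
    by (simp add: distortion_def cross_ratio_F_def y_def p_def q_def r_def s_def)
  define x where "x = (if y = \<beta> then \<alpha> else 1/\<alpha>)"
  have x0: "x > 0" using ab by (simp add: x_def)
  define m where "m = 1 / sqrt (x * y)"
  have m0: "m > 0" using x0 y0 by (simp add: m_def)
  define A where "A = mk2 r (m * p) r (x * m * p)"
  have pA: "pos_matrix A" unfolding A_def using pos m0 x0 by (intro pos_mk2) auto
  have FA: "cross_ratio_F A = x" unfolding A_def cross_ratio_F_def using pos m0 by simp
  have dA: "distortion A = \<alpha>" unfolding distortion_def FA x_def
    using max_ge1[OF assms(1)] max_inv[OF assms(1)] by auto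
  have PhiE: "Phi x y = Phi \<alpha> \<beta>" using yc Phi_inv[OF ab] by (auto simp: x_def)
  have "cross_ratio_F (A ** B) = ((r * p+m * p * r) * (r * q+x * m * p * s))/((r * q+m * p * s) * (r * p+x * m * p * r))"
    unfolding cross_ratio_F_def mult_entries A_def by (simp add: p_def q_def r_def s_def mult.assoc)
  also have "\<dots> = Phi x y" unfolding algB[OF pos m0 x0] y_def[symmetric]
    using key[OF x0 y0 m_def] .
  finally have "cross_ratio_F (A ** B) = Phi \<alpha> \<beta>" using PhiE by simp
  hence "distortion (A ** B) = Phi \<alpha> \<beta>" unfolding distortion_def using max_ge1[OF P1] by simp
  thus "\<exists>A. pos_matrix A \<and> distortion A = \<alpha> \<and> distortion (A ** B) = Phi \<alpha> \<beta>"
    using pA dA by blast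
qed

end
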